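(* In the online volunteer notification problem, under the index-based priority scheme and the sparse notification (SN) policy, for every volunteer $v\in[V]$, the expected number of tasks completed by $v$ is at least $J_{v,1}$.
   Context: Online volunteer notification problem. An instance consists of volunteers $[V]$, task types $[S]$, horizon $T$, arrival probabilities $\lambda_{s,t}\ge0$ with $\sum_{s=1}^S\lambda_{s,t}\le1$ (and $\lambda_{0,t}=1-\sum_s\lambda_{s,t}$), match probabilities $p_{v,s}\in[0,1]$, and a probability mass function $g$ on the positive integers with CDF $G(\tau)=\sum_{i\le\tau}g(i)$, $G(0)=0$. In each period $t$ at most one task arrives, of type $s$ with probability $\lambda_{s,t}$, independently across periods. All volunteers start active. Upon an arrival, the platform notifies a subset of volunteers; each notified active volunteer $v$ responds positively independently with probability $p_{v,s}$. A volunteer active and notified at time $t$ becomes inactive (regardless of response) and becomes active again at $t+Z$, $Z\sim g$ independent; inactive volunteers ignore notifications and are unaffected by them. Index-based priority scheme: if several notified active volunteers respond positively to a task, the one with the smallest index completes it. Ex ante solution $\mathbf{x}^*$: let $\mathcal{P}$ be the set of $\mathbf{x}$ with $0\le x_{v,s,t}\le1$ and $\sum_{\tau=1}^t\sum_s\lambda_{s,\tau}x_{v,s,\tau}(1-G(t-\tau))\le1$ for all $v,t$; $f(\mathbf{x})=\sum_{t,s}\lambda_{s,t}(1-\prod_v(1-x_{v,s,t}p_{v,s}))$; $\mathbf{x}^*_{LP}$ maximizes $\sum_{t,s}\lambda_{s,t}\min\{\sum_vx_{v,s,t}p_{v,s},1\}$ over $\mathcal{P}$; $\mathbf{x}^*_{AA}$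 is the output of: $\mathbf{x}^0=\mathbf{0}$, for $i=1..m$ ($m\in\mathbb{N}$) $\mathbf{y}^i\in\arg\max_{\mathbf{x}\in\mathcal{P}}\langle\mathbf{x},\nabla f(\mathbf{x}^{i-1})\rangle$, $\mathbf{x}^i=\mathbf{x}^{i-1}+\mathbf{y}^i/m$, output $\mathbf{x}^m$; $\mathbf{x}^*_{SQ}$ is built for $v=1..V$ in order with $(x^{SQ}_{v,s,t})_{s,t}$ optimal for $\max\sum_{t,s}\lambda_{s,t}\prod_{u<v}(1-p_{u,s}x^{SQ}_{u,s,t})p_{v,s}x_{v,s,t}$ s.t. $0\le x_{v,s,t}\le1$ and $\sum_{\tau\le t}\sum_s\lambda_{s,\tau}x_{v,s,\tau}(1-G(t-\tau))\le1$ for all $t$; $\mathbf{x}^*\in\arg\max_{\mathbf{x}\in\{\mathbf{x}^*_{LP},\mathbf{x}^*_{AA},\mathbf{x}^*_{SQ}\}}f(\mathbf{x})$. SN policy: offline, for $v=1,\dots,V$ in order: $r_{v,s,t}=p_{v,s}\prod_{u=1}^{v-1}(1-\tilde x_{u,s,t}p_{u,s})$; $J_{v,T+1}=0$; for $t=T$ down to $1$: $\tilde x_{v,s,t}=x^*_{v,s,t}\mathbb{I}\{r_{v,s,t}+\sum_{\tau=t+1}^Tg(\tau-t)J_{v,\tau}\ge J_{v,t+1}\}$ for $s\in[S]$ (with $\tilde x_{v,0,t}=r_{v,0,t}=0$), and $J_{v,t}=\sum_{s=0}^S\lambda_{s,t}\big((1-\tilde x_{v,s,t})J_{v,t+1}+\tilde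 x_{v,s,t}(r_{v,s,t}+\sum_{\tau=t+1}^Tg(\tau-t)J_{v,\tau})\big)$. Online: when a task of type $s$ arrives at time $t$, each volunteer $v$ is notified independently with probability $\tilde x_{v,s,t}$. *)

theory Defs
  imports "HOL-Probability.Probability"
begin

(* Conventions:
   volunteers v \<in> {1..V}, task types s \<in> {1..S} (s = 0 means "no arrival"), periods t \<in> {1..T}.
   lam s t = \<lambda>_{s,t};  p v s = p_{v,s};  g :: nat pmf is the return-time distribution
   (a pmf on the positive integers: pmf g 0 = 0).  Vectors x are functions v s t \<mapsto> x_{v,s,t}. *)

type_synonym vec3 = "nat \<Rightarrow> nat \<Rightarrow> nat \<Rightarrow> real"

definition CDF :: "nat pmf \<Rightarrow> nat \<Rightarrow> real" where
  "CDF g \<tau> = (\<Sum>i\<in>{1..\<tau>}. pmf g i)"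

definition polyP :: "nat \<Rightarrow> nat \<Rightarrow> nat \<Rightarrow> (nat \<Rightarrow> nat \<Rightarrow> real) \<Rightarrow> nat pmf \<Rightarrow> vec3 set" where
  "polyP V S T lam g = {x.
     (\<forall>v s t. \<not> (v \<in> {1..V} \<and> s \<in> {1..S} \<and> t \<in> {1..T}) \<longrightarrow> x v s t = 0) \<and>
     (\<forall>v\<in>{1..V}. \<forall>s\<in>{1..S}. \<forall>t\<in>{1..T}. 0 \<le> x v s t \<and> x v s t \<le> 1) \<and>
     (\<forall>v\<in>{1..V}. \<forall>t\<in>{1..T}.
        (\<Sum>\<tau>\<in>{1..t}. \<Sum>s\<in>{1..S}. lam s \<tau> * x v s \<tau> * (1 - CDF g (t - \<tau>))) \<le> 1)}"

definition fobj :: "nat \<Rightarrow> nat \<Rightarrow> nat \<Rightarrow> (nat \<Rightarrow> nat \<Rightarrow> real) \<Rightarrow> (nat \<Rightarrow> nat \<Rightarrow> real) \<Rightarrow> vec3 \<Rightarrow> real" where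
  "fobj V S T lam p x = (\<Sum>t\<in>{1..T}. \<Sum>s\<in>{1..S}.
      lam s t * (1 - (\<Prod>v\<in>{1..V}. 1 - x v s t * p v s)))"

definition grad_fobj :: "nat \<Rightarrow> nat \<Rightarrow> nat \<Rightarrow> (nat \<Rightarrow> nat \<Rightarrow> real) \<Rightarrow> (nat \<Rightarrow> nat \<Rightarrow> real) \<Rightarrow> vec3 \<Rightarrow> vec3" where
  "grad_fobj V S T lam p x = (\<lambda>v s t.
      if v \<in> {1..V} \<and> s \<in> {1..S} \<and> t \<in> {1..T}
      then lam s t * p v s * (\<Prod>u\<in>{1..V} - {v}. 1 - x u s t * p u s) else 0)"

definition inner3 :: "nat \<Rightarrow> nat \<Rightarrow> nat \<Rightarrow> vec3 \<Rightarrow> vec3 \<Rightarrow> real" where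
  "inner3 V S T x y = (\<Sum>v\<in>{1..V}. \<Sum>s\<in>{1..S}. \<Sum>t\<in>{1..T}. x v s t * y v s t)"

definition LPobj :: "nat \<Rightarrow> nat \<Rightarrow> nat \<Rightarrow> (nat \<Rightarrow> nat \<Rightarrow> real) \<Rightarrow> (nat \<Rightarrow> nat \<Rightarrow> real) \<Rightarrow> vec3 \<Rightarrow> real" where
  "LPobj V S T lam p x = (\<Sum>t\<in>{1..T}. \<Sum>s\<in>{1..S}.
      lam s t * min (\<Sum>v\<in>{1..V}. x v s t * p v s) 1)"

definition is_xLP where
  "is_xLP V S T lam p g x \<longleftrightarrow> x \<in> polyP V S T lam g \<and>
     (\<forall>y\<in>polyP V S T lam g. LPobj V S T lam p y \<le> LPobj V S T lam p x)"

definition is_xAA where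
  "is_xAA V S T lam p g x \<longleftrightarrow> (\<exists>(m::nat) > 0. \<exists>X Y :: nat \<Rightarrow> vec3.
     X 0 = (\<lambda>_ _ _. 0) \<and>
     (\<forall>i\<in>{1..m}.
        Y i \<in> polyP V S T lam g \<and>
        (\<forall>y\<in>polyP V S T lam g.
           inner3 V S T y (grad_fobj V S T lam p (X (i - 1)))
             \<le> inner3 V S T (Y i) (grad_fobj V S T lam p (X (i - 1)))) \<and>
        X i = (\<lambda>v s t. X (i - 1) v s t + Y i v s t / real m)) \<and>
     x = X m)"

(* feasible set of the single-volunteer problem in the sequential construction *)
definition polyP1 :: "nat \<Rightarrow> nat \<Rightarrow> (nat \<Rightarrow> nat \<Rightarrow> real) \<Rightarrow> nat pmf \<Rightarrow> (nat \<Rightarrow> nat \<Rightarrow> real) set" where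
  "polyP1 S T lam g = {y.
     (\<forall>s t. \<not> (s \<in> {1..S} \<and> t \<in> {1..T}) \<longrightarrow> y s t = 0) \<and>
     (\<forall>s\<in>{1..S}. \<forall>t\<in>{1..T}. 0 \<le> y s t \<and> y s t \<le> 1) \<and>
     (\<forall>t\<in>{1..T}. (\<Sum>\<tau>\<in>{1..t}. \<Sum>s\<in>{1..S}. lam s \<tau> * y s \<tau> * (1 - CDF g (t - \<tau>))) \<le> 1)}"

definition SQobj :: "nat \<Rightarrow> nat \<Rightarrow> (nat \<Rightarrow> nat \<Rightarrow> real) \<Rightarrow> (nat \<Rightarrow> nat \<Rightarrow> real) \<Rightarrow> vec3 \<Rightarrow> nat \<Rightarrow> (nat \<Rightarrow> nat \<Rightarrow> real) \<Rightarrow> real" where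
  "SQobj S T lam p x v y = (\<Sum>t\<in>{1..T}. \<Sum>s\<in>{1..S}.
      lam s t * (\<Prod>u\<in>{1..<v}. 1 - p u s * x u s t) * p v s * y s t)"

definition is_xSQ where
  "is_xSQ V S T lam p g x \<longleftrightarrow>
     (\<forall>v s t. v \<notin> {1..V} \<longrightarrow> x v s t = 0) \<and>
     (\<forall>v\<in>{1..V}. x v \<in> polyP1 S T lam g \<and>
        (\<forall>y\<in>polyP1 S T lam g. SQobj S T lam p x v y \<le> SQobj S T lam p x v (x v)))"

definition is_ex_ante_solution where
  "is_ex_ante_solution V S T lam p g x \<longleftrightarrow>
     (\<exists>xl xa xq. is_xLP V S T lam p g xl \<and> is_xAA V S T lam p g xa \<and> is_xSQ V S T lam p g xq \<and>
        x \<in> {xl, xa, xq} \<and>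
        (\<forall>y\<in>{xl, xa, xq}. fobj V S T lam p y \<le> fobj V S T lam p x))"

definition SN_cont :: "nat \<Rightarrow> nat pmf \<Rightarrow> (nat \<Rightarrow> real) \<Rightarrow> nat \<Rightarrow> real" where
  "SN_cont T g J t = (\<Sum>\<tau>\<in>{t+1..T}. pmf g (\<tau> - t) * J \<tau>)"

(* thresholded notification probability, given reward r_{v,.,.}, ex ante x*_{v,.,.} and J_{v,.} *)
definition SN_thr :: "nat \<Rightarrow> nat pmf \<Rightarrow> (nat \<Rightarrow> nat \<Rightarrow> real) \<Rightarrow> (nat \<Rightarrow> nat \<Rightarrow> real) \<Rightarrow> (nat \<Rightarrow> real) \<Rightarrow> nat \<Rightarrow> nat \<Rightarrow> real" where
  "SN_thr T g rv xv J s t = xv s t * (if rv s t + SN_cont T g J t \<ge> J (t + 1) then 1 else 0)"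

definition SN_Jstep :: "nat \<Rightarrow> nat \<Rightarrow> (nat \<Rightarrow> nat \<Rightarrow> real) \<Rightarrow> nat pmf \<Rightarrow> (nat \<Rightarrow> nat \<Rightarrow> real) \<Rightarrow> (nat \<Rightarrow> nat \<Rightarrow> real) \<Rightarrow> (nat \<Rightarrow> real) \<Rightarrow> nat \<Rightarrow> real" where
  "SN_Jstep S T lam g rv xv J t =
     (1 - (\<Sum>s\<in>{1..S}. lam s t)) * J (t + 1) +
     (\<Sum>s\<in>{1..S}. lam s t * ((1 - SN_thr T g rv xv J s t) * J (t + 1)
                               + SN_thr T g rv xv J s t * (rv s t + SN_cont T g J t)))"

(* backward induction: after k steps, the values J_T, ..., J_{T-k+1} have been computed;
   all other entries (in particular J_{T+1}) are 0 *)
primrec SN_Jtab :: "nat \<Rightarrow> nat \<Rightarrow> (nat \<Rightarrow> nat \<Rightarrow> real) \<Rightarrow> nat pmf \<Rightarrow> (nat \<Rightarrow> nat \<Rightarrow> real) \<Rightarrow> (nat \<Rightarrow> nat \<Rightarrow> real) \<Rightarrow> nat \<Rightarrow> nat \<Rightarrow> real" where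
  "SN_Jtab S T lam g rv xv 0 = (\<lambda>_. 0)"
| "SN_Jtab S T lam g rv xv (Suc k) =
     (SN_Jtab S T lam g rv xv k)(T - k := SN_Jstep S T lam g rv xv (SN_Jtab S T lam g rv xv k) (T - k))"

definition SN_J :: "nat \<Rightarrow> nat \<Rightarrow> (nat \<Rightarrow> nat \<Rightarrow> real) \<Rightarrow> nat pmf \<Rightarrow> (nat \<Rightarrow> nat \<Rightarrow> real) \<Rightarrow> (nat \<Rightarrow> nat \<Rightarrow> real) \<Rightarrow> nat \<Rightarrow> real" where
  "SN_J S T lam g rv xv = SN_Jtab S T lam g rv xv T"

definition SN_r :: "(nat \<Rightarrow> nat \<Rightarrow> real) \<Rightarrow> vec3 \<Rightarrow> nat \<Rightarrow> nat \<Rightarrow> nat \<Rightarrow> real" where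
  "SN_r p xt v = (\<lambda>s t. p v s * (\<Prod>u\<in>{1..<v}. 1 - xt u s t * p u s))"

definition SN_tilde_v :: "nat \<Rightarrow> nat \<Rightarrow> (nat \<Rightarrow> nat \<Rightarrow> real) \<Rightarrow> nat pmf \<Rightarrow> (nat \<Rightarrow> nat \<Rightarrow> real) \<Rightarrow> (nat \<Rightarrow> nat \<Rightarrow> real) \<Rightarrow> nat \<Rightarrow> nat \<Rightarrow> real" where
  "SN_tilde_v S T lam g rv xv = (\<lambda>s t.
     if s \<in> {1..S} then SN_thr T g rv xv (SN_J S T lam g rv xv) s t else 0)"

(* \<tilde>x for volunteers 1..k (0 for the others) *)
primrec SN_upto :: "nat \<Rightarrow> nat \<Rightarrow> (nat \<Rightarrow> nat \<Rightarrow> real) \<Rightarrow> (nat \<Rightarrow> nat \<Rightarrow> real) \<Rightarrow> nat pmf \<Rightarrow> vec3 \<Rightarrow> nat \<Rightarrow> vec3" where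
  "SN_upto S T lam p g xs 0 = (\<lambda>_ _ _. 0)"
| "SN_upto S T lam p g xs (Suc k) =
     (SN_upto S T lam p g xs k)(Suc k :=
        SN_tilde_v S T lam g (SN_r p (SN_upto S T lam p g xs k) (Suc k)) (xs (Suc k)))"

definition SN_xtilde :: "nat \<Rightarrow> nat \<Rightarrow> nat \<Rightarrow> (nat \<Rightarrow> nat \<Rightarrow> real) \<Rightarrow> (nat \<Rightarrow> nat \<Rightarrow> real) \<Rightarrow> nat pmf \<Rightarrow> vec3 \<Rightarrow> vec3" where
  "SN_xtilde V S T lam p g xs = SN_upto S T lam p g xs V"

definition SN_Jv :: "nat \<Rightarrow> nat \<Rightarrow> (nat \<Rightarrow> nat \<Rightarrow> real) \<Rightarrow> (nat \<Rightarrow> nat \<Rightarrow> real) \<Rightarrow> nat pmf \<Rightarrow> vec3 \<Rightarrow> nat \<Rightarrow> nat \<Rightarrow> real" where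
  "SN_Jv S T lam p g xs v =
     SN_J S T lam g (SN_r p (SN_upto S T lam p g xs (v - 1)) v) (xs v)"

definition arrival :: "nat \<Rightarrow> (nat \<Rightarrow> nat \<Rightarrow> real) \<Rightarrow> nat \<Rightarrow> nat pmf" where
  "arrival S lam t = embed_pmf (\<lambda>s. if s = 0 then 1 - (\<Sum>s'\<in>{1..S}. lam s' t)
                                    else if s \<le> S then lam s t else 0)"

(* State: ret v = period at which v is (again) active; v is active at t iff ret v \<le> t.
   One period t under the randomized notification rule q v s t (notify v w.p. q v s t).
   Result: new state and the volunteer (if any) who completes the task, by the
   index-based priority scheme (smallest index among positive responders). *)
definition period_step :: "nat \<Rightarrow> nat \<Rightarrow> (nat \<Rightarrow> nat \<Rightarrow> real) \<Rightarrow> (nat \<Rightarrow> nat \<Rightarrow> real) \<Rightarrow> nat pmf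
     \<Rightarrow> vec3 \<Rightarrow> nat \<Rightarrow> (nat \<Rightarrow> nat) \<Rightarrow> ((nat \<Rightarrow> nat) \<times> nat option) pmf" where
  "period_step V S lam p g q t ret =
     bind_pmf (arrival S lam t) (\<lambda>s.
       if s = 0 then return_pmf (ret, None) else
       bind_pmf (Pi_pmf {1..V} False (\<lambda>v. bernoulli_pmf (q v s t))) (\<lambda>N.
       bind_pmf (Pi_pmf {1..V} False (\<lambda>v. bernoulli_pmf (p v s))) (\<lambda>R.
       bind_pmf (Pi_pmf {1..V} 0 (\<lambda>v. g)) (\<lambda>Z.
         let C = {v\<in>{1..V}. ret v \<le> t \<and> N v \<and> R v} in
         return_pmf (\<lambda>v. if ret v \<le> t \<and> N v then t + Z v else ret v,
                     if C = {} then None else Some (Min C))))))"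

(* distribution after periods 1..n: (state, number of tasks completed by each volunteer);
   initially all volunteers are active *)
primrec run :: "nat \<Rightarrow> nat \<Rightarrow> (nat \<Rightarrow> nat \<Rightarrow> real) \<Rightarrow> (nat \<Rightarrow> nat \<Rightarrow> real) \<Rightarrow> nat pmf
     \<Rightarrow> vec3 \<Rightarrow> nat \<Rightarrow> ((nat \<Rightarrow> nat) \<times> (nat \<Rightarrow> nat)) pmf" where
  "run V S lam p g q 0 = return_pmf (\<lambda>_. 0, \<lambda>_. 0)"
| "run V S lam p g q (Suc n) =
     bind_pmf (run V S lam p g q n) (\<lambda>(ret, cnt).
       map_pmf (\<lambda>(ret', c). (ret', case c of None \<Rightarrow> cnt | Some u \<Rightarrow> cnt(u := Suc (cnt u))))
               (period_step V S lam p g q (Suc n) ret))"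

definition expected_completed :: "nat \<Rightarrow> nat \<Rightarrow> nat \<Rightarrow> (nat \<Rightarrow> nat \<Rightarrow> real) \<Rightarrow> (nat \<Rightarrow> nat \<Rightarrow> real)
     \<Rightarrow> nat pmf \<Rightarrow> vec3 \<Rightarrow> nat \<Rightarrow> real" where
  "expected_completed V S T lam p g q v =
     measure_pmf.expectation (run V S lam p g q T) (\<lambda>(ret, cnt). real (cnt v))"

end

theory Submission
  imports Defs
begin

lemma int_bdd:
  fixes f :: "'a \<Rightarrow> real"
  shows "(\<And>x. \<bar>f x\<bar> \<le> B) \<Longrightarrow> integrable (measure_pmf M) f"
  by (rule measure_pmf.integrable_const_bound[where B=B]) auto

lemma int_bdd_AE:
  fixes f :: "'a \<Rightarrow> real"
  shows "(\<And>x. x \<in> set_pmf M \<Longrightarrow> \<bar>f x\<bar> \<le> B) \<Longrightarrow> integrable (measure_pmf M) f"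
  by (rule measure_pmf.integrable_const_bound[where B=B]) (auto simp: AE_measure_pmf_iff)

lemma integral_bind_pmf_bdd:
  fixes f :: "'b \<Rightarrow> real"
  assumes "\<And>x. \<bar>f x\<bar> \<le> B"
  shows "measure_pmf.expectation (bind_pmf M N) f = measure_pmf.expectation M (\<lambda>x. measure_pmf.expectation (N x) f)"
  unfolding measure_pmf_bind
  apply (rule integral_bind[where K="count_space UNIV" and B=B and B'=1])
  using assms by (auto simp: measure_pmf_in_subprob_algebra)

lemma integral_bind_pmf_bdd2:
  fixes f :: "'b \<Rightarrow> real"
  assumes B: "\<And>y. y \<in> set_pmf (bind_pmf M N) \<Longrightarrow> \<bar>f y\<bar> \<le> B"
  shows "measure_pmf.expectation (bind_pmf M N) f = measure_pmf.expectation M (\<lambda>x. measure_pmf.expectation (N x) f)"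
proof -
  define f' where "f' y = max (-\<bar>B\<bar>) (min \<bar>B\<bar> (f y))" for y
  have "measure_pmf.expectation (bind_pmf M N) f = measure_pmf.expectation (bind_pmf M N) f'"
  proof (rule integral_cong_AE)
    show "AE y in measure_pmf (bind_pmf M N). f y = f' y"
      unfolding AE_measure_pmf_iff
    proof
      fix y assume "y \<in> set_pmf (bind_pmf M N)"
      then have "\<bar>f y\<bar> \<le> B" by (rule B)
      then show "f y = f' y" by (auto simp: f'_def)
    qed
  qed auto
  also have "\<dots> = measure_pmf.expectation M (\<lambda>x. measure_pmf.expectation (N x) f')"
    by (rule integral_bind_pmf_bdd[where B="\<bar>B\<bar>"]) (auto simp: f'_def)
  also have "\<dots> = measure_pmf.expectation M (\<lambda>x. measure_pmf.expectation (N x) f)"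
  proof (rule integral_cong_AE)
    show "AE x in measure_pmf M. measure_pmf.expectation (N x) f' = measure_pmf.expectation (N x) f"
      unfolding AE_measure_pmf_iff
    proof (intro ballI integral_cong_AE)
      fix x assume x: "x \<in> set_pmf M"
      show "AE y in measure_pmf (N x). f' y = f y"
        unfolding AE_measure_pmf_iff
      proof
        fix y assume "y \<in> set_pmf (N x)"
        then have "y \<in> set_pmf (bind_pmf M N)" using x by auto
        then have "\<bar>f y\<bar> \<le> B" by (rule B)
        then show "f' y = f y" by (auto simp: f'_def)
      qed
    qed auto
  qed auto
  finally show ?thesis .
qed

lemma pmf_arrival:
  assumes nn: "\<And>s. s \<in> {1..S} \<Longrightarrow> lam s t \<ge> 0" and sm: "(\<Sum>s\<in>{1..S}. lam s t) \<le> 1"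
  shows "pmf (arrival S lam t) s = (if s = 0 then 1 - (\<Sum>s'\<in>{1..S}. lam s' t) else if s \<le> S then lam s t else 0)"
  unfolding arrival_def
proof (rule pmf_embed_pmf)
  fix s show "0 \<le> (if s = 0 then 1 - (\<Sum>s'\<in>{1..S}. lam s' t) else if s \<le> S then lam s t else 0)"
    using nn sm by auto
next
  let ?f = "\<lambda>s. (if s = 0 then 1 - (\<Sum>s'\<in>{1..S}. lam s' t) else if s \<le> S then lam s t else 0)"
  have "(\<integral>\<^sup>+ x. ennreal (?f x) \<partial>count_space UNIV) = (\<Sum>x\<in>{0..S}. ennreal (?f x))"
    by (rule nn_integral_count_space') auto
  also have "\<dots> = ennreal (\<Sum>x\<in>{0..S}. ?f x)"
    using nn sm by (intro sum_ennreal) auto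
  also have "(\<Sum>x\<in>{0..S}. ?f x) = ?f 0 + (\<Sum>x\<in>{1..S}. ?f x)"
    by (subst sum.atLeast_Suc_atMost) auto
  also have "(\<Sum>x\<in>{1..S}. ?f x) = (\<Sum>x\<in>{1..S}. lam x t)"
    by (rule sum.cong) auto
  finally show "(\<integral>\<^sup>+ x. ennreal (?f x) \<partial>count_space UNIV) = 1" by simp
qed

lemma expectation_arrival:
  fixes h :: "nat \<Rightarrow> real"
  assumes nn: "\<And>s. s \<in> {1..S} \<Longrightarrow> lam s t \<ge> 0" and sm: "(\<Sum>s\<in>{1..S}. lam s t) \<le> 1"
  shows "measure_pmf.expectation (arrival S lam t) h
     = (1 - (\<Sum>s\<in>{1..S}. lam s t)) * h 0 + (\<Sum>s\<in>{1..S}. lam s t * h s)"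
proof -
  have pa: "pmf (arrival S lam t) s = (if s = 0 then 1 - (\<Sum>s'\<in>{1..S}. lam s' t) else if s \<le> S then lam s t else 0)" for s
    by (rule pmf_arrival) (use nn sm in auto)
  have "measure_pmf.expectation (arrival S lam t) h = (\<Sum>s\<in>{0..S}. h s * pmf (arrival S lam t) s)"
  proof (rule integral_measure_pmf_real)
    fix a assume "a \<in> set_pmf (arrival S lam t)"
    then have "pmf (arrival S lam t) a \<noteq> 0" by (simp add: set_pmf_eq)
    then show "a \<in> {0..S}" using pa[of a] by (auto split: if_splits)
  qed auto
  also have "\<dots> = h 0 * pmf (arrival S lam t) 0 + (\<Sum>s\<in>{1..S}. h s * pmf (arrival S lam t) s)"
    by (subst sum.atLeast_Suc_atMost) auto
  also have "(\<Sum>s\<in>{1..S}. h s * pmf (arrival S lam t) s) = (\<Sum>s\<in>{1..S}. lam s t * h s)"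
    by (rule sum.cong) (auto simp: pa)
  finally show ?thesis by (simp add: pa)
qed

lemma expectation_Pi_component:
  fixes h :: "'b \<Rightarrow> real"
  assumes "finite A" "x \<in> A" "\<And>y. \<bar>h y\<bar> \<le> B"
  shows "measure_pmf.expectation (Pi_pmf A dflt P) (\<lambda>f. h (f x)) = measure_pmf.expectation (P x) h"
proof -
  have "measure_pmf.expectation (Pi_pmf A dflt P) (\<lambda>f. h (f x))
      = measure_pmf.expectation (map_pmf (\<lambda>f. f x) (Pi_pmf A dflt P)) h"
    by simp
  also have "map_pmf (\<lambda>f. f x) (Pi_pmf A dflt P) = P x"
    using Pi_pmf_component[OF assms(1), of x dflt P] assms(2) by simp
  finally show ?thesis .
qed

lemma Jstep_cong:
  assumes "\<And>\<tau>. \<tau> > t \<Longrightarrow> J \<tau> = J' \<tau>"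
  shows "SN_Jstep S T lam g rv xv J t = SN_Jstep S T lam g rv xv J' t"
proof -
  have c: "SN_cont T g J t = SN_cont T g J' t"
    unfolding SN_cont_def by (rule sum.cong) (auto simp: assms)
  have j: "J (t + 1) = J' (t + 1)" by (simp add: assms)
  show ?thesis unfolding SN_Jstep_def SN_thr_def c j ..
qed

lemma Jtab_zero: "k \<le> T \<Longrightarrow> \<tau> > T \<or> \<tau> = 0 \<Longrightarrow> SN_Jtab S T lam g rv xv k \<tau> = 0"
  by (induction k) auto

lemma Jtab_stable: "\<tau> > T - k \<Longrightarrow> SN_Jtab S T lam g rv xv (k + d) \<tau> = SN_Jtab S T lam g rv xv k \<tau>"
  by (induction d) auto

lemma J_zero: "\<tau> > T \<or> \<tau> = 0 \<Longrightarrow> SN_J S T lam g rv xv \<tau> = 0"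
  unfolding SN_J_def by (rule Jtab_zero) auto

lemma J_rec:
  assumes t: "t \<in> {1..T}"
  shows "SN_J S T lam g rv xv t = SN_Jstep S T lam g rv xv (SN_J S T lam g rv xv) t"
proof -
  define k where "k = T - t"
  have kT: "k < T" "T - k = t" using t by (auto simp: k_def)
  have "SN_J S T lam g rv xv t = SN_Jtab S T lam g rv xv (Suc k + (T - Suc k)) t"
    unfolding SN_J_def using kT by simp
  also have "\<dots> = SN_Jtab S T lam g rv xv (Suc k) t"
    by (rule Jtab_stable) (use kT in auto)
  also have "\<dots> = SN_Jstep S T lam g rv xv (SN_Jtab S T lam g rv xv k) t"
    using kT by simp
  also have "\<dots> = SN_Jstep S T lam g rv xv (SN_J S T lam g rv xv) t"
  proof (rule Jstep_cong)
    fix \<tau> assume "\<tau> > t"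
    show "SN_Jtab S T lam g rv xv k \<tau> = SN_J S T lam g rv xv \<tau>"
    proof (cases "\<tau> > T")
      case True
      then show ?thesis using Jtab_zero[of k T \<tau>] J_zero[of T \<tau>] kT by auto
    next
      case False
      have "SN_J S T lam g rv xv \<tau> = SN_Jtab S T lam g rv xv (k + (T - k)) \<tau>"
        unfolding SN_J_def using kT(1) by simp
      also have "\<dots> = SN_Jtab S T lam g rv xv k \<tau>"
        by (rule Jtab_stable) (use kT \<open>\<tau> > t\<close> in auto)
      finally show ?thesis by simp
    qed
  qed
  finally show ?thesis .
qed

lemma upto_zero: "u > k \<or> u = 0 \<Longrightarrow> SN_upto S T lam p g xs k u = (\<lambda>_ _. 0)"
  by (induction k) auto

lemma upto_stable: "u \<le> k \<Longrightarrow> SN_upto S T lam p g xs (k + d) u = SN_upto S T lam p g xs k u"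
  by (induction d) auto

lemma upto_bounds:
  assumes "k \<le> V"
    and xb: "\<And>u s t. u \<in> {1..V} \<Longrightarrow> s \<in> {1..S} \<Longrightarrow> t \<in> {1..T} \<Longrightarrow> 0 \<le> xs u s t \<and> xs u s t \<le> 1"
    and t: "t \<in> {1..T}"
  shows "0 \<le> SN_upto S T lam p g xs k u s t \<and> SN_upto S T lam p g xs k u s t \<le> 1"
  using assms(1)
proof (induction k arbitrary: u)
  case 0
  then show ?case by simp
next
  case (Suc k)
  show ?case
  proof (cases "u = Suc k")
    case True
    then show ?thesis using xb[of u s t] t Suc.prems
      by (auto simp: SN_tilde_v_def SN_thr_def)
  next
    case False
    then show ?thesis using Suc by auto
  qed
qed

lemma xs_bounds:
  assumes "is_ex_ante_solution V S T lam p g xs"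
    and u: "u \<in> {1..V}" and s: "s \<in> {1..S}" and t: "t \<in> {1..T}"
  shows "0 \<le> xs u s t \<and> xs u s t \<le> 1"
proof -
  obtain xl xa xq where sol: "is_xLP V S T lam p g xl" "is_xAA V S T lam p g xa" "is_xSQ V S T lam p g xq"
    and mem: "xs \<in> {xl, xa, xq}"
    using assms(1) unfolding is_ex_ante_solution_def by blast
  have "0 \<le> xl u s t \<and> xl u s t \<le> 1"
    using sol(1) u s t unfolding is_xLP_def polyP_def by blast
  moreover have "0 \<le> xq u s t \<and> xq u s t \<le> 1"
    using sol(3) u s t unfolding is_xSQ_def polyP1_def by blast
  moreover have "0 \<le> xa u s t \<and> xa u s t \<le> 1"
  proof -
    obtain m :: nat and X Y where m: "m > 0" and X0: "X 0 = (\<lambda>_ _ _. 0)"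
      and step: "\<And>i. i \<in> {1..m} \<Longrightarrow> Y i \<in> polyP V S T lam g \<and>
          X i = (\<lambda>v s t. X (i - 1) v s t + Y i v s t / real m)"
      and xa: "xa = X m"
      using sol(2) unfolding is_xAA_def by blast
    have "i \<le> m \<Longrightarrow> 0 \<le> X i u s t \<and> X i u s t \<le> real i / real m" for i
    proof (induction i)
      case 0
      then show ?case by (simp add: X0)
    next
      case (Suc i)
      have st: "Y (Suc i) \<in> polyP V S T lam g" "X (Suc i) = (\<lambda>v s t. X i v s t + Y (Suc i) v s t / real m)"
        using step[of "Suc i"] Suc.prems by auto
      have y: "0 \<le> Y (Suc i) u s t \<and> Y (Suc i) u s t \<le> 1"
        using st(1) u s t unfolding polyP_def by blast
      have ih: "0 \<le> X i u s t \<and> X i u s t \<le> real i / real m" using Suc by auto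
      have "Y (Suc i) u s t / real m \<le> 1 / real m"
        using y m by (simp add: divide_right_mono)
      then show ?case using ih y m st(2) by (simp add: add_divide_distrib)
    qed
    from this[of m] m show ?thesis by (simp add: xa)
  qed
  ultimately show ?thesis using mem by auto
qed

lemma exp_abs_le:
  fixes f :: "'a \<Rightarrow> real"
  assumes "\<And>x. \<bar>f x\<bar> \<le> B"
  shows "\<bar>measure_pmf.expectation M f\<bar> \<le> B"
proof -
  have "norm (measure_pmf.expectation M f) \<le> measure_pmf.expectation M (\<lambda>x. norm (f x))"
    by (rule integral_norm_bound)
  also have "\<dots> \<le> B"
    by (rule measure_pmf.integral_le_const) (use assms in \<open>auto intro!: int_bdd[where B=B]\<close>)
  finally show ?thesis by simp
qed

lemma expectation_g_shift:
  fixes J :: "nat \<Rightarrow> real"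
  assumes g0: "pmf g 0 = 0" and Jz: "\<And>\<tau>. \<tau> > T \<Longrightarrow> J \<tau> = 0" and t: "t \<le> T"
  shows "measure_pmf.expectation g (\<lambda>z. J (max (t + z) (Suc t)))
       = (\<Sum>\<tau>\<in>{t+1..T}. pmf g (\<tau> - t) * J \<tau>)"
proof -
  have "measure_pmf.expectation g (\<lambda>z. J (max (t + z) (Suc t)))
      = (\<Sum>z\<in>{1..T-t}. J (max (t + z) (Suc t)) * pmf g z)"
  proof (rule integral_measure_pmf_real)
    fix z assume z: "z \<in> set_pmf g" "J (max (t + z) (Suc t)) \<noteq> 0"
    have "z \<noteq> 0"
    proof
      assume "z = 0" with z(1) g0 show False by (simp add: set_pmf_eq)
    qed
    moreover have "max (t + z) (Suc t) \<le> T" using z(2) Jz by (meson not_le)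
    ultimately show "z \<in> {1..T-t}" by auto
  qed auto
  also have "\<dots> = (\<Sum>z\<in>{1..T-t}. pmf g (z + t - t) * J (z + t))"
    by (rule sum.cong) (auto simp: max_def add.commute)
  also have "\<dots> = (\<Sum>\<tau>\<in>{1+t..(T-t)+t}. pmf g (\<tau> - t) * J \<tau>)"
    by (rule sum.shift_bounds_cl_nat_ivl[symmetric])
  also have "{1+t..(T-t)+t} = {t+1..T}" using t by auto
  finally show ?thesis .
qed

lemma prod01_abs:
  fixes f :: "'a \<Rightarrow> real"
  shows "(\<And>u. u \<in> A \<Longrightarrow> 0 \<le> f u \<and> f u \<le> 1) \<Longrightarrow> \<bar>\<Prod>u\<in>A. f u\<bar> \<le> 1"
  by (metis abs_of_nonneg prod_le_1 prod_nonneg)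

lemma EA_bound:
  fixes q :: vec3 and p :: "nat \<Rightarrow> nat \<Rightarrow> real" and ret :: "nat \<Rightarrow> nat"
  assumes p01: "\<And>u. u \<in> {1..V} \<Longrightarrow> 0 \<le> p u s \<and> p u s \<le> 1"
    and q01: "\<And>u. 0 \<le> q u s t \<and> q u s t \<le> 1"
    and v: "v \<in> {1..V}" and rv: "ret v \<le> t"
  shows "measure_pmf.expectation (Pi_pmf {1..V} False (\<lambda>u. bernoulli_pmf (q u s t)))
          (\<lambda>N. measure_pmf.expectation (Pi_pmf {1..V} False (\<lambda>u. bernoulli_pmf (p u s)))
            (\<lambda>R. if (if {u\<in>{1..V}. ret u \<le> t \<and> N u \<and> R u} = {} then None
                     else Some (Min {u\<in>{1..V}. ret u \<le> t \<and> N u \<and> R u})) = Some v then 1 else 0))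
        \<ge> q v s t * p v s * (\<Prod>u\<in>{1..<v}. 1 - q u s t * p u s)"
    (is "measure_pmf.expectation ?NN (\<lambda>N. measure_pmf.expectation ?RR (\<lambda>R. ?A N R)) \<ge> _")
proof -
  define h :: "nat \<Rightarrow> bool \<Rightarrow> bool \<Rightarrow> real" where
    "h u a b = (if u = v then (if a \<and> b then 1 else 0) else if u < v then (if a \<and> b then 0 else 1) else 1)" for u a b
  define k :: "nat \<Rightarrow> bool \<Rightarrow> real" where
    "k u a = h u a True * p u s + h u a False * (1 - p u s)" for u a
  have h01: "0 \<le> h u a b \<and> h u a b \<le> 1" for u a b by (auto simp: h_def)
  have A01: "0 \<le> ?A N R \<and> ?A N R \<le> 1" for N R by auto
  have k01: "0 \<le> k u a \<and> k u a \<le> 1" if "u \<in> {1..V}" for u a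
    using p01[OF that] by (auto simp: k_def h_def)
  have pw: "(\<Prod>u\<in>{1..V}. h u (N u) (R u)) \<le> ?A N R" for N R
  proof (cases "N v \<and> R v \<and> (\<forall>u\<in>{1..<v}. \<not> (N u \<and> R u))")
    case True
    let ?C = "{u\<in>{1..V}. ret u \<le> t \<and> N u \<and> R u}"
    have vC: "v \<in> ?C" using True v rv by auto
    have fC: "finite ?C" by auto
    have "Min ?C = v"
    proof (rule antisym)
      show "Min ?C \<le> v" using vC fC by auto
      have "Min ?C \<in> ?C" using vC fC by (intro Min_in) auto
      then show "v \<le> Min ?C" using True by (metis (mono_tags, lifting) atLeastAtMost_iff
          atLeastLessThan_iff mem_Collect_eq not_le)
    qed
    then have "?A N R = 1" using vC by auto
    moreover have "(\<Prod>u\<in>{1..V}. h u (N u) (R u)) \<le> 1"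
      by (rule prod_le_1) (use h01 in auto)
    ultimately show ?thesis by simp
  next
    case False
    then have "\<exists>u\<in>{1..V}. h u (N u) (R u) = 0"
      using v by (auto simp: h_def)
    then have z: "(\<Prod>u\<in>{1..V}. h u (N u) (R u)) = 0" by (simp add: prod_zero_iff)
    show ?thesis by (subst z) (rule conjunct1[OF A01])
  qed
  have inner: "measure_pmf.expectation ?RR (\<lambda>R. ?A N R) \<ge> (\<Prod>u\<in>{1..V}. k u (N u))" for N
  proof -
    have "(\<Prod>u\<in>{1..V}. k u (N u))
        = (\<Prod>u\<in>{1..V}. measure_pmf.expectation (bernoulli_pmf (p u s)) (\<lambda>b. h u (N u) b))"
      by (rule prod.cong) (use p01 in \<open>auto simp: k_def\<close>)
    also have "\<dots> = measure_pmf.expectation ?RR (\<lambda>R. \<Prod>u\<in>{1..V}. h u (N u) (R u))"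
      by (rule expectation_prod_Pi_pmf[symmetric]) (use h01 in \<open>auto intro!: int_bdd[where B=1]\<close>)
    also have "\<dots> \<le> measure_pmf.expectation ?RR (\<lambda>R. ?A N R)"
    proof (rule integral_mono)
      show "integrable ?RR (\<lambda>R. \<Prod>u\<in>{1..V}. h u (N u) (R u))"
        by (rule int_bdd[where B=1]) (use h01 in \<open>auto intro!: prod01_abs\<close>)
      show "integrable ?RR (\<lambda>R. ?A N R)" by (rule int_bdd[where B=1]) auto
    qed (rule pw)
    finally show ?thesis .
  qed
  have "q v s t * p v s * (\<Prod>u\<in>{1..<v}. 1 - q u s t * p u s)
      = (\<Prod>u\<in>{1..V}. k u True * q u s t + k u False * (1 - q u s t))"
  proof -
    let ?m = "\<lambda>u. k u True * q u s t + k u False * (1 - q u s t)"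
    have m1: "?m u = 1" if "u > v" for u using that by (simp add: k_def h_def)
    have mlt: "?m u = 1 - q u s t * p u s" if "u < v" for u using that by (simp add: k_def h_def algebra_simps)
    have mv: "?m v = q v s t * p v s" by (simp add: k_def h_def)
    have "(\<Prod>u\<in>{1..V}. ?m u) = (\<Prod>u\<in>{1..<Suc v}. ?m u)"
      by (rule prod.mono_neutral_right) (use v m1 in auto)
    also have "\<dots> = (\<Prod>u\<in>{1..<v}. ?m u) * ?m v"
      by (rule prod.atLeastLessThan_Suc) (use v in auto)
    also have "(\<Prod>u\<in>{1..<v}. ?m u) = (\<Prod>u\<in>{1..<v}. 1 - q u s t * p u s)"
      by (rule prod.cong) (auto simp: mlt)
    finally show ?thesis by (simp add: mv)
  qed
  also have "\<dots> = (\<Prod>u\<in>{1..V}. measure_pmf.expectation (bernoulli_pmf (q u s t)) (k u))"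
    by (rule prod.cong) (use q01 in auto)
  also have "\<dots> = measure_pmf.expectation ?NN (\<lambda>N. \<Prod>u\<in>{1..V}. k u (N u))"
    by (rule expectation_prod_Pi_pmf[symmetric]) (use k01 in \<open>auto intro!: int_bdd[where B=1]\<close>)
  also have "\<dots> \<le> measure_pmf.expectation ?NN (\<lambda>N. measure_pmf.expectation ?RR (\<lambda>R. ?A N R))"
  proof (rule integral_mono)
    show "integrable ?NN (\<lambda>N. \<Prod>u\<in>{1..V}. k u (N u))"
      by (rule int_bdd[where B=1]) (use k01 in \<open>auto intro!: prod01_abs\<close>)
    show "integrable ?NN (\<lambda>N. measure_pmf.expectation ?RR (\<lambda>R. ?A N R))"
      by (rule int_bdd[where B=1], rule exp_abs_le) auto
  qed (rule inner)
  finally show ?thesis .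
qed

lemma exp_add_const:
  fixes h :: "'a \<Rightarrow> real"
  assumes "\<And>x. \<bar>h x\<bar> \<le> B"
  shows "measure_pmf.expectation M (\<lambda>x. c + h x) = c + measure_pmf.expectation M h"
proof -
  have "measure_pmf.expectation M (\<lambda>x. c + h x) = measure_pmf.expectation M (\<lambda>x. c) + measure_pmf.expectation M h"
    by (rule Bochner_Integration.integral_add) (auto intro!: int_bdd[where B=B] assms)
  then show ?thesis by simp
qed

lemma exp_add:
  fixes h1 h2 :: "'a \<Rightarrow> real"
  assumes "\<And>x. \<bar>h1 x\<bar> \<le> B1" "\<And>x. \<bar>h2 x\<bar> \<le> B2"
  shows "measure_pmf.expectation M (\<lambda>x. h1 x + h2 x) = measure_pmf.expectation M h1 + measure_pmf.expectation M h2"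
  by (rule Bochner_Integration.integral_add) (auto intro!: int_bdd assms)

lemma inner_ineq:
  fixes J :: "nat \<Rightarrow> real" and q :: vec3 and ret :: "nat \<Rightarrow> nat"
  assumes p01: "\<And>u. u \<in> {1..V} \<Longrightarrow> 0 \<le> p u s \<and> p u s \<le> 1"
    and q01: "\<And>u. 0 \<le> q u s t \<and> q u s t \<le> 1"
    and g0: "pmf g 0 = 0"
    and Jz: "\<And>\<tau>. \<tau> > T \<Longrightarrow> J \<tau> = 0"
    and JB: "\<And>\<tau>. \<bar>J \<tau>\<bar> \<le> B"
    and v: "v \<in> {1..V}" and t: "t \<le> T" and rv: "ret v \<le> t"
    and f_def: "f = (\<lambda>(ret' :: nat \<Rightarrow> nat, c). (if c = Some v then 1 else 0) + J (max (ret' v) (Suc t)))"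
  shows "measure_pmf.expectation
     (bind_pmf (Pi_pmf {1..V} False (\<lambda>v. bernoulli_pmf (q v s t))) (\<lambda>N.
       bind_pmf (Pi_pmf {1..V} False (\<lambda>v. bernoulli_pmf (p v s))) (\<lambda>R.
       bind_pmf (Pi_pmf {1..V} 0 (\<lambda>v. g)) (\<lambda>Z.
         let C = {v\<in>{1..V}. ret v \<le> t \<and> N v \<and> R v} in
         return_pmf (\<lambda>v. if ret v \<le> t \<and> N v then t + Z v else ret v,
                     if C = {} then None else Some (Min C)))))) f
     \<ge> (1 - q v s t) * J (t + 1) + q v s t * (p v s * (\<Prod>u\<in>{1..<v}. 1 - q u s t * p u s)
            + (\<Sum>\<tau>\<in>{t+1..T}. pmf g (\<tau> - t) * J \<tau>))"
proof -
  let ?NN = "Pi_pmf {1..V} False (\<lambda>v. bernoulli_pmf (q v s t))"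
  let ?RR = "Pi_pmf {1..V} False (\<lambda>v. bernoulli_pmf (p v s))"
  let ?ZZ = "Pi_pmf {1..V} 0 (\<lambda>v. g)"
  define A :: "(nat \<Rightarrow> bool) \<Rightarrow> (nat \<Rightarrow> bool) \<Rightarrow> real" where
    "A N R = (if (if {u\<in>{1..V}. ret u \<le> t \<and> N u \<and> R u} = {} then None
                     else Some (Min {u\<in>{1..V}. ret u \<le> t \<and> N u \<and> R u})) = Some v then 1 else 0)" for N R
  define \<phi> where "\<phi> b z = J (max (if b then t + z else ret v) (Suc t))" for b z
  define \<beta> where "\<beta> b = measure_pmf.expectation g (\<phi> b)" for b
  have fB: "\<bar>f x\<bar> \<le> 1 + B" for x
    using JB[of "max (fst x v) (Suc t)"] unfolding f_def by (auto split: prod.splits)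
  have AB: "\<bar>A N R\<bar> \<le> 1" for N R by (simp add: A_def)
  have \<phi>B: "\<bar>\<phi> b z\<bar> \<le> B" for b z by (simp add: \<phi>_def JB)
  have \<beta>B: "\<bar>\<beta> b\<bar> \<le> B" for b unfolding \<beta>_def by (rule exp_abs_le) (rule \<phi>B)
  have EAB: "\<bar>measure_pmf.expectation ?RR (A N)\<bar> \<le> 1" for N by (rule exp_abs_le) (rule AB)
  note bind_eq = integral_bind_pmf_bdd[where f=f and B="1+B", OF fB]
  have "measure_pmf.expectation
     (bind_pmf ?NN (\<lambda>N. bind_pmf ?RR (\<lambda>R. bind_pmf ?ZZ (\<lambda>Z.
         let C = {v\<in>{1..V}. ret v \<le> t \<and> N v \<and> R v} in
         return_pmf (\<lambda>v. if ret v \<le> t \<and> N v then t + Z v else ret v,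
                     if C = {} then None else Some (Min C)))))) f
     = measure_pmf.expectation ?NN (\<lambda>N. measure_pmf.expectation ?RR (\<lambda>R.
         measure_pmf.expectation ?ZZ (\<lambda>Z. A N R + \<phi> (N v) (Z v))))"
    by (simp only: bind_eq expectation_return_pmf Let_def) (simp add: f_def A_def \<phi>_def rv)
  also have "\<dots> = measure_pmf.expectation ?NN (\<lambda>N. measure_pmf.expectation ?RR (\<lambda>R.
         A N R + \<beta> (N v)))"
  proof (intro Bochner_Integration.integral_cong refl)
    fix N R
    have "measure_pmf.expectation ?ZZ (\<lambda>Z. A N R + \<phi> (N v) (Z v))
        = A N R + measure_pmf.expectation ?ZZ (\<lambda>Z. \<phi> (N v) (Z v))"
      by (rule exp_add_const) (rule \<phi>B)
    also have "measure_pmf.expectation ?ZZ (\<lambda>Z. \<phi> (N v) (Z v)) = \<beta> (N v)"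
      unfolding \<beta>_def by (rule expectation_Pi_component) (use v \<phi>B in auto)
    finally show "measure_pmf.expectation ?ZZ (\<lambda>Z. A N R + \<phi> (N v) (Z v)) = A N R + \<beta> (N v)" .
  qed
  also have "\<dots> = measure_pmf.expectation ?NN (\<lambda>N. measure_pmf.expectation ?RR (A N) + \<beta> (N v))"
  proof (intro Bochner_Integration.integral_cong refl)
    fix N
    show "measure_pmf.expectation ?RR (\<lambda>R. A N R + \<beta> (N v)) = measure_pmf.expectation ?RR (A N) + \<beta> (N v)"
      using exp_add_const[where h="A N" and B=1 and c="\<beta> (N v)" and M="?RR"] AB by (simp add: add.commute)
  qed
  also have "\<dots> = measure_pmf.expectation ?NN (\<lambda>N. measure_pmf.expectation ?RR (A N))
                 + measure_pmf.expectation ?NN (\<lambda>N. \<beta> (N v))"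
    by (rule exp_add) (rule EAB, rule \<beta>B)
  also have "measure_pmf.expectation ?NN (\<lambda>N. \<beta> (N v)) = measure_pmf.expectation (bernoulli_pmf (q v s t)) \<beta>"
    by (rule expectation_Pi_component) (use v \<beta>B in auto)
  also have "\<dots> = \<beta> True * q v s t + \<beta> False * (1 - q v s t)"
    using q01[of v] by simp
  also have "\<beta> True = (\<Sum>\<tau>\<in>{t+1..T}. pmf g (\<tau> - t) * J \<tau>)"
    unfolding \<beta>_def \<phi>_def using expectation_g_shift[OF g0 Jz t] by simp
  also have "\<beta> False = J (t + 1)"
    unfolding \<beta>_def \<phi>_def using rv by simp
  finally have eq: "measure_pmf.expectation
     (bind_pmf ?NN (\<lambda>N. bind_pmf ?RR (\<lambda>R. bind_pmf ?ZZ (\<lambda>Z.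
         let C = {v\<in>{1..V}. ret v \<le> t \<and> N v \<and> R v} in
         return_pmf (\<lambda>v. if ret v \<le> t \<and> N v then t + Z v else ret v,
                     if C = {} then None else Some (Min C)))))) f
     = measure_pmf.expectation ?NN (\<lambda>N. measure_pmf.expectation ?RR (A N))
       + ((\<Sum>\<tau>\<in>{t+1..T}. pmf g (\<tau> - t) * J \<tau>) * q v s t + J (t + 1) * (1 - q v s t))" .
  have "measure_pmf.expectation ?NN (\<lambda>N. measure_pmf.expectation ?RR (A N))
        \<ge> q v s t * p v s * (\<Prod>u\<in>{1..<v}. 1 - q u s t * p u s)"
    unfolding A_def by (rule EA_bound[of V p s q t v ret]) (use p01 q01 v rv in auto)
  then show ?thesis unfolding eq by (simp add: algebra_simps)
qed

lemma min_ret_le: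
  fixes ret :: "nat \<Rightarrow> nat"
  assumes "\<not> ret (Min {v. Suc 0 \<le> v \<and> v \<le> V \<and> ret v \<le> t \<and> A v}) \<le> t"
    and "A c" "Suc 0 \<le> c" "c \<le> V" "ret c \<le> t"
  shows False
proof -
  let ?C = "{v. Suc 0 \<le> v \<and> v \<le> V \<and> ret v \<le> t \<and> A v}"
  have "finite ?C" by (rule finite_subset[of _ "{..V}"]) auto
  moreover have "c \<in> ?C" using assms by auto
  ultimately have "Min ?C \<in> ?C" by (intro Min_in) auto
  then show False using assms(1) by auto
qed

lemma period_step_inactive:
  assumes "x \<in> set_pmf (period_step V S lam p g q t ret)" "\<not> ret w \<le> t"
  shows "snd x \<noteq> Some w \<and> fst x w = ret w"
  using assms
  apply (auto simp: period_step_def Let_def split: if_splits)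
  apply (erule min_ret_le)
  apply auto
  done

lemma step_ineq:
  fixes J :: "nat \<Rightarrow> real" and q :: vec3 and ret :: "nat \<Rightarrow> nat"
  assumes lam_nn: "\<And>s. s \<in> {1..S} \<Longrightarrow> lam s t \<ge> 0" and lam_sum: "(\<Sum>s\<in>{1..S}. lam s t) \<le> 1"
    and p01: "\<And>u s. u \<in> {1..V} \<Longrightarrow> s \<in> {1..S} \<Longrightarrow> 0 \<le> p u s \<and> p u s \<le> 1"
    and q01: "\<And>u s. 0 \<le> q u s t \<and> q u s t \<le> 1"
    and g0: "pmf g 0 = 0"
    and Jz: "\<And>\<tau>. \<tau> > T \<Longrightarrow> J \<tau> = 0"
    and JB: "\<And>\<tau>. \<bar>J \<tau>\<bar> \<le> B"
    and v: "v \<in> {1..V}" and t: "t \<le> T"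
    and Jt: "J t = (1 - (\<Sum>s\<in>{1..S}. lam s t)) * J (t + 1) +
       (\<Sum>s\<in>{1..S}. lam s t * ((1 - q v s t) * J (t + 1) + q v s t * (p v s * (\<Prod>u\<in>{1..<v}. 1 - q u s t * p u s)
            + (\<Sum>\<tau>\<in>{t+1..T}. pmf g (\<tau> - t) * J \<tau>))))"
  shows "measure_pmf.expectation (period_step V S lam p g q t ret)
           (\<lambda>(ret', c). (if c = Some v then 1 else 0) + J (max (ret' v) (Suc t))) \<ge> J (max (ret v) t)"
proof -
  define f where "f = (\<lambda>(ret' :: nat \<Rightarrow> nat, c). (if c = Some v then 1 else 0) + J (max (ret' v) (Suc t)))"
  have fB: "\<bar>f x\<bar> \<le> 1 + B" for x
    using JB[of "max (fst x v) (Suc t)"] unfolding f_def by (auto split: prod.splits)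
  show ?thesis
  proof (cases "ret v \<le> t")
    case False
    have "\<forall>x\<in>set_pmf (period_step V S lam p g q t ret). f x = J (ret v)"
    proof
      fix x assume x: "x \<in> set_pmf (period_step V S lam p g q t ret)"
      show "f x = J (ret v)"
      proof (cases "snd x = Some v")
        case True
        then show ?thesis using period_step_inactive[OF x False] by simp
      next
        case c: False
        have "fst x v = ret v" using period_step_inactive[OF x False] by simp
        then show ?thesis using c False unfolding f_def by (auto split: prod.splits)
      qed
    qed
    then have "measure_pmf.expectation (period_step V S lam p g q t ret) f
       = measure_pmf.expectation (period_step V S lam p g q t ret) (\<lambda>_. J (ret v))"
      by (intro integral_cong_AE) (auto simp: AE_measure_pmf_iff)
    then show ?thesis using False unfolding f_def by simp
  next
    case rv: True
    define hs where "hs s = measure_pmf.expectation (if s = 0 then return_pmf (ret, None) else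
       bind_pmf (Pi_pmf {1..V} False (\<lambda>v. bernoulli_pmf (q v s t))) (\<lambda>N.
       bind_pmf (Pi_pmf {1..V} False (\<lambda>v. bernoulli_pmf (p v s))) (\<lambda>R.
       bind_pmf (Pi_pmf {1..V} 0 (\<lambda>v. g)) (\<lambda>Z.
         let C = {v\<in>{1..V}. ret v \<le> t \<and> N v \<and> R v} in
         return_pmf (\<lambda>v. if ret v \<le> t \<and> N v then t + Z v else ret v,
                     if C = {} then None else Some (Min C)))))) f" for s
    have "measure_pmf.expectation (period_step V S lam p g q t ret) f
        = measure_pmf.expectation (arrival S lam t) hs"
      unfolding period_step_def hs_def by (rule integral_bind_pmf_bdd[OF fB])
    also have "\<dots> = (1 - (\<Sum>s\<in>{1..S}. lam s t)) * hs 0 + (\<Sum>s\<in>{1..S}. lam s t * hs s)"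
      by (rule expectation_arrival) (use lam_nn lam_sum in auto)
    also have "hs 0 = J (t + 1)" using rv by (simp add: hs_def f_def)
    finally have E: "measure_pmf.expectation (period_step V S lam p g q t ret) f
        = (1 - (\<Sum>s\<in>{1..S}. lam s t)) * J (t + 1) + (\<Sum>s\<in>{1..S}. lam s t * hs s)" .
    have "(\<Sum>s\<in>{1..S}. lam s t * ((1 - q v s t) * J (t + 1) + q v s t * (p v s * (\<Prod>u\<in>{1..<v}. 1 - q u s t * p u s)
            + (\<Sum>\<tau>\<in>{t+1..T}. pmf g (\<tau> - t) * J \<tau>)))) \<le> (\<Sum>s\<in>{1..S}. lam s t * hs s)"
    proof (rule sum_mono)
      fix s assume s: "s \<in> {1..S}"
      have "(1 - q v s t) * J (t + 1) + q v s t * (p v s * (\<Prod>u\<in>{1..<v}. 1 - q u s t * p u s)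
            + (\<Sum>\<tau>\<in>{t+1..T}. pmf g (\<tau> - t) * J \<tau>)) \<le> hs s"
        unfolding hs_def using s
        apply (subst if_not_P) apply simp
        by (intro inner_ineq[where V=V and p=p and s=s and q=q and t=t and g=g
              and T=T and J=J and B=B and v=v and ret=ret and f=f])
           (use p01 q01 s g0 Jz JB v t rv f_def in auto)
      then show "lam s t * ((1 - q v s t) * J (t + 1) + q v s t * (p v s * (\<Prod>u\<in>{1..<v}. 1 - q u s t * p u s)
            + (\<Sum>\<tau>\<in>{t+1..T}. pmf g (\<tau> - t) * J \<tau>))) \<le> lam s t * hs s"
        using lam_nn[OF s] by (rule mult_left_mono)
    qed
    then have "J t \<le> measure_pmf.expectation (period_step V S lam p g q t ret) f"
      unfolding E Jt by simp
    then show ?thesis using rv unfolding f_def by simp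
  qed
qed

lemma run_cnt_bound:
  "x \<in> set_pmf (run V S lam p g q n) \<Longrightarrow> snd x v \<le> n"
proof (induction n arbitrary: x)
  case 0
  then show ?case by simp
next
  case (Suc n)
  from Suc.prems obtain ret cnt y where y: "(ret, cnt) \<in> set_pmf (run V S lam p g q n)"
    and x: "x = (fst y, case snd y of None \<Rightarrow> cnt | Some u \<Rightarrow> cnt(u := Suc (cnt u)))"
    by (auto split: prod.splits)
  have "cnt v \<le> n" using Suc.IH[OF y] by simp
  then show ?case using x by (auto split: option.splits)
qed

lemma run_potential:
  fixes J :: "nat \<Rightarrow> real" and q :: vec3
  assumes lam_nn: "\<And>s t. s \<in> {1..S} \<Longrightarrow> t \<in> {1..T} \<Longrightarrow> lam s t \<ge> 0"
    and lam_sum: "\<And>t. t \<in> {1..T} \<Longrightarrow> (\<Sum>s\<in>{1..S}. lam s t) \<le> 1"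
    and p01: "\<And>u s. u \<in> {1..V} \<Longrightarrow> s \<in> {1..S} \<Longrightarrow> 0 \<le> p u s \<and> p u s \<le> 1"
    and q01: "\<And>u s t. t \<in> {1..T} \<Longrightarrow> 0 \<le> q u s t \<and> q u s t \<le> 1"
    and g0: "pmf g 0 = 0"
    and Jz: "\<And>\<tau>. \<tau> > T \<Longrightarrow> J \<tau> = 0"
    and JB: "\<And>\<tau>. \<bar>J \<tau>\<bar> \<le> B"
    and v: "v \<in> {1..V}"
    and Jt: "\<And>t. t \<in> {1..T} \<Longrightarrow> J t = (1 - (\<Sum>s\<in>{1..S}. lam s t)) * J (t + 1) +
       (\<Sum>s\<in>{1..S}. lam s t * ((1 - q v s t) * J (t + 1) + q v s t * (p v s * (\<Prod>u\<in>{1..<v}. 1 - q u s t * p u s)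
            + (\<Sum>\<tau>\<in>{t+1..T}. pmf g (\<tau> - t) * J \<tau>))))"
  shows "n \<le> T \<Longrightarrow> measure_pmf.expectation (run V S lam p g q n)
            (\<lambda>(ret, cnt). real (cnt v) + J (max (ret v) (Suc n))) \<ge> J 1"
proof (induction n)
  case 0
  then show ?case by simp
next
  case (Suc n)
  define \<Phi> where "\<Phi> m = (\<lambda>(ret :: nat \<Rightarrow> nat, cnt :: nat \<Rightarrow> nat). real (cnt v) + J (max (ret v) (Suc m)))" for m
  define f where "f = (\<lambda>(ret' :: nat \<Rightarrow> nat, c). (if c = Some v then 1 else 0) + J (max (ret' v) (Suc (Suc n))))"
  define G where "G = (\<lambda>cnt :: nat \<Rightarrow> nat. \<lambda>(ret' :: nat \<Rightarrow> nat, c). (ret', case c of None \<Rightarrow> cnt | Some u \<Rightarrow> cnt(u := Suc (cnt u))))"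
  define Nk where "Nk = (\<lambda>(ret, cnt). map_pmf (G cnt) (period_step V S lam p g q (Suc n) ret))"
  define inner where "inner x = measure_pmf.expectation (Nk x) (\<Phi> (Suc n))" for x
  have run_eq: "run V S lam p g q (Suc n) = bind_pmf (run V S lam p g q n) Nk"
    by (simp add: Nk_def G_def)
  have B0: "0 \<le> B" using JB[of 0] by simp
  have fB: "\<bar>f x\<bar> \<le> 1 + B" for x
    using JB[of "max (fst x v) (Suc (Suc n))"] unfolding f_def by (auto split: prod.splits)
  have t: "Suc n \<in> {1..T}" using Suc.prems by auto
  have "measure_pmf.expectation (run V S lam p g q (Suc n)) (\<Phi> (Suc n))
      = measure_pmf.expectation (run V S lam p g q n) inner"
    unfolding run_eq inner_def
  proof (rule integral_bind_pmf_bdd2[where B="real (Suc n) + B"])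
    fix y assume "y \<in> set_pmf (run V S lam p g q n \<bind> Nk)"
    then have "y \<in> set_pmf (run V S lam p g q (Suc n))" by (simp only: run_eq)
    then have "snd y v \<le> Suc n" by (rule run_cnt_bound)
    then show "\<bar>\<Phi> (Suc n) y\<bar> \<le> real (Suc n) + B"
      using JB[of "max (fst y v) (Suc (Suc n))"] unfolding \<Phi>_def by (auto split: prod.splits)
  qed
  also have "\<dots> \<ge> measure_pmf.expectation (run V S lam p g q n) (\<Phi> n)"
  proof (rule integral_mono_AE)
    show "integrable (measure_pmf (run V S lam p g q n)) (\<Phi> n)"
    proof (rule int_bdd_AE[where B="real n + B"])
      fix y assume "y \<in> set_pmf (run V S lam p g q n)"
      then have "snd y v \<le> n" by (rule run_cnt_bound)
      then show "\<bar>\<Phi> n y\<bar> \<le> real n + B"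
        using JB[of "max (fst y v) (Suc n)"] unfolding \<Phi>_def by (auto split: prod.splits)
    qed
    have inner_eq: "inner (ret, cnt) = real (cnt v) + measure_pmf.expectation (period_step V S lam p g q (Suc n) ret) f"
      for ret cnt
    proof -
      have "inner (ret, cnt) = measure_pmf.expectation (period_step V S lam p g q (Suc n) ret)
              (\<lambda>x. real (cnt v) + f x)"
        unfolding inner_def Nk_def prod.case integral_map_pmf
        by (intro Bochner_Integration.integral_cong refl)
           (auto simp: \<Phi>_def G_def f_def split: option.splits prod.splits)
      also have "\<dots> = real (cnt v) + measure_pmf.expectation (period_step V S lam p g q (Suc n) ret) f"
        by (rule exp_add_const) (rule fB)
      finally show ?thesis .
    qed
    show "integrable (measure_pmf (run V S lam p g q n)) inner"
    proof (rule int_bdd_AE[where B="real n + 1 + B"])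
      fix y assume "y \<in> set_pmf (run V S lam p g q n)"
      then have "snd y v \<le> n" by (rule run_cnt_bound)
      moreover have "\<bar>measure_pmf.expectation (period_step V S lam p g q (Suc n) (fst y)) f\<bar> \<le> 1 + B"
        by (rule exp_abs_le) (rule fB)
      ultimately show "\<bar>inner y\<bar> \<le> real n + 1 + B"
        using inner_eq[of "fst y" "snd y"] by auto
    qed
    show "AE x in measure_pmf (run V S lam p g q n). \<Phi> n x \<le> inner x"
    proof (rule AE_pmfI)
      fix y :: "(nat \<Rightarrow> nat) \<times> (nat \<Rightarrow> nat)"
      obtain ret cnt where y: "y = (ret, cnt)" by fastforce
      have "J (max (ret v) (Suc n)) \<le> measure_pmf.expectation (period_step V S lam p g q (Suc n) ret) f"
        unfolding f_def
        by (rule step_ineq[where B=B and T=T])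
           (use lam_nn[OF _ t] lam_sum[OF t] p01 q01[OF t] g0 Jz JB v t Jt[OF t] in auto)
      then show "\<Phi> n y \<le> inner y" unfolding y inner_eq by (simp add: \<Phi>_def)
    qed
  qed
  finally show ?case using Suc by (simp add: \<Phi>_def)
qed

theorem lemma2:
  fixes V S T :: nat
    and lam :: "nat \<Rightarrow> nat \<Rightarrow> real"
    and p :: "nat \<Rightarrow> nat \<Rightarrow> real"
    and g :: "nat pmf"
    and xs :: "nat \<Rightarrow> nat \<Rightarrow> nat \<Rightarrow> real"
    and v :: nat
  assumes lam_nonneg: "\<And>s t. s \<in> {1..S} \<Longrightarrow> t \<in> {1..T} \<Longrightarrow> lam s t \<ge> 0"
    and lam_sum: "\<And>t. t \<in> {1..T} \<Longrightarrow> (\<Sum>s\<in>{1..S}. lam s t) \<le> 1"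
    and p_prob: "\<And>u s. u \<in> {1..V} \<Longrightarrow> s \<in> {1..S} \<Longrightarrow> 0 \<le> p u s \<and> p u s \<le> 1"
    and g_pos: "pmf g 0 = 0"
    and xs_sol: "is_ex_ante_solution V S T lam p g xs"
    and v: "v \<in> {1..V}"
  shows "expected_completed V S T lam p g (SN_xtilde V S T lam p g xs) v
           \<ge> SN_Jv S T lam p g xs v 1"
proof -
  define q where "q = SN_xtilde V S T lam p g xs"
  define rv where "rv = SN_r p (SN_upto S T lam p g xs (v - 1)) v"
  define J where "J = SN_J S T lam g rv (xs v)"
  define B where "B = (\<Sum>\<tau>\<in>{0..T}. \<bar>J \<tau>\<bar>)"
  have Jv: "SN_Jv S T lam p g xs v = J" by (simp add: SN_Jv_def J_def rv_def)
  have xb: "\<And>u s t. u \<in> {1..V} \<Longrightarrow> s \<in> {1..S} \<Longrightarrow> t \<in> {1..T} \<Longrightarrow> 0 \<le> xs u s t \<and> xs u s t \<le> 1"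
    by (rule xs_bounds[OF xs_sol])
  have q01: "0 \<le> q u s t \<and> q u s t \<le> 1" if "t \<in> {1..T}" for u s t
    unfolding q_def SN_xtilde_def by (rule upto_bounds[OF _ xb that]) auto
  have qv: "q v = SN_tilde_v S T lam g rv (xs v)"
  proof -
    have "q v = SN_upto S T lam p g xs (v + (V - v)) v"
      unfolding q_def SN_xtilde_def using v by simp
    also have "\<dots> = SN_upto S T lam p g xs v v" by (rule upto_stable) simp
    also have "\<dots> = SN_upto S T lam p g xs (Suc (v - 1)) v" using v by simp
    also have "\<dots> = SN_tilde_v S T lam g rv (xs v)"
      unfolding rv_def using v by (simp only: SN_upto.simps fun_upd_same Suc_diff_1) auto
    finally show ?thesis .
  qed
  have qu: "SN_upto S T lam p g xs (v - 1) u = q u" if "u < v" for u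
  proof (cases "u = 0")
    case True
    then show ?thesis unfolding q_def SN_xtilde_def by (simp add: upto_zero)
  next
    case False
    have "q u = SN_upto S T lam p g xs ((v - 1) + (V - (v - 1))) u"
      unfolding q_def SN_xtilde_def using v by simp
    also have "\<dots> = SN_upto S T lam p g xs (v - 1) u" by (rule upto_stable) (use that in auto)
    finally show ?thesis by simp
  qed
  have rv_eq: "rv s t = p v s * (\<Prod>u\<in>{1..<v}. 1 - q u s t * p u s)" for s t
  proof -
    have "(\<Prod>u\<in>{1..<v}. 1 - SN_upto S T lam p g xs (v - 1) u s t * p u s)
        = (\<Prod>u\<in>{1..<v}. 1 - q u s t * p u s)"
    proof (rule prod.cong)
      fix u assume "u \<in> {1..<v}"
      then have "SN_upto S T lam p g xs (v - 1) u = q u" by (intro qu) auto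
      then show "1 - SN_upto S T lam p g xs (v - 1) u s t * p u s = 1 - q u s t * p u s" by simp
    qed simp
    then show ?thesis unfolding rv_def SN_r_def by simp
  qed
  have Jz: "J \<tau> = 0" if "\<tau> > T" for \<tau> unfolding J_def by (rule J_zero) (use that in auto)
  have JB: "\<bar>J \<tau>\<bar> \<le> B" for \<tau>
  proof (cases "\<tau> \<le> T")
    case True
    then show ?thesis unfolding B_def by (intro member_le_sum) auto
  next
    case False
    then show ?thesis using Jz[of \<tau>] unfolding B_def by (simp add: sum_nonneg)
  qed
  have Jt: "J t = (1 - (\<Sum>s\<in>{1..S}. lam s t)) * J (t + 1) +
       (\<Sum>s\<in>{1..S}. lam s t * ((1 - q v s t) * J (t + 1) + q v s t * (p v s * (\<Prod>u\<in>{1..<v}. 1 - q u s t * p u s)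
            + (\<Sum>\<tau>\<in>{t+1..T}. pmf g (\<tau> - t) * J \<tau>))))" if t: "t \<in> {1..T}" for t
  proof -
    have "J t = SN_Jstep S T lam g rv (xs v) J t" unfolding J_def by (rule J_rec[OF t])
    also have "\<dots> = (1 - (\<Sum>s\<in>{1..S}. lam s t)) * J (t + 1) +
       (\<Sum>s\<in>{1..S}. lam s t * ((1 - q v s t) * J (t + 1) + q v s t * (p v s * (\<Prod>u\<in>{1..<v}. 1 - q u s t * p u s)
            + (\<Sum>\<tau>\<in>{t+1..T}. pmf g (\<tau> - t) * J \<tau>))))"
      unfolding SN_Jstep_def
    proof (intro arg_cong2[where f="(+)"] refl sum.cong)
      fix s assume s: "s \<in> {1..S}"
      have "SN_thr T g rv (xs v) J s t = q v s t" using s by (simp add: qv SN_tilde_v_def J_def)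
      then show "lam s t * ((1 - SN_thr T g rv (xs v) J s t) * J (t + 1) + SN_thr T g rv (xs v) J s t * (rv s t + SN_cont T g J t))
        = lam s t * ((1 - q v s t) * J (t + 1) + q v s t * (p v s * (\<Prod>u\<in>{1..<v}. 1 - q u s t * p u s)
            + (\<Sum>\<tau>\<in>{t+1..T}. pmf g (\<tau> - t) * J \<tau>)))"
        by (simp add: rv_eq SN_cont_def)
    qed
    finally show ?thesis .
  qed
  have main: "measure_pmf.expectation (run V S lam p g q T)
            (\<lambda>(ret, cnt). real (cnt v) + J (max (ret v) (Suc T))) \<ge> J 1"
    by (rule run_potential[where B=B and n=T and T=T and J=J]) (use lam_nonneg lam_sum p_prob q01 g_pos Jz JB v Jt in auto)
  have "measure_pmf.expectation (run V S lam p g q T)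
            (\<lambda>(ret, cnt). real (cnt v) + J (max (ret v) (Suc T)))
      = expected_completed V S T lam p g q v"
    unfolding expected_completed_def
    by (intro Bochner_Integration.integral_cong refl) (auto simp: Jz split: prod.splits)
  with main show ?thesis unfolding Jv q_def by simp
qed

end
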